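(* Let $k \geq 1$ and let $G_0,\dots,G_{k-1}$ be bipartite graphs such that for all $i \neq j$ in $\{0,\dots,k-1\}$, $V(G_i)\cap V(G_j) = \{g\}$ for a single common vertex $g$. Let $G = \bigcup_{i=0}^{k-1} G_i$ (vertex set $\bigcup_i V(G_i)$, edge set $\bigcup_i E(G_i)$). Suppose that for each $i$, $\phi_{G_i}$ is a well-begun $l_i$-encoding of $G_i$. Then $G$ has a well-begun $l$-encoding, where $l = \max_{0\le i\le k-1} l_i + \lceil \log_2 k \rceil$.
   Context: For a graph $G=(V,E)$ and $l\in\mathbb{N}$, an $l$-encoding of $G$ is a function $\phi: V \to \mathbb{N}^l$ such that $\phi$ is injective and for all $u,v \in V$, $\{u,v\}\in E$ if and only if $\phi(u)$ and $\phi(v)$ differ in all $l$ coordinates. An $l$-encoding $\phi$ of $G$ is well-begun if the first coordinate of $\phi(v)$ lies in $\{0,1,\dots,\chi(G)-1\}$ for every vertex $v$, where $\chi(G)$ is the chromatic number of $G$. *)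

theory Defs
  imports Complex_Main
begin

definition simple_graph :: "'a set \<Rightarrow> 'a set set \<Rightarrow> bool" where
  "simple_graph V E \<longleftrightarrow> finite V \<and>
     (\<forall>e\<in>E. \<exists>u v. e = {u, v} \<and> u \<noteq> v \<and> u \<in> V \<and> v \<in> V)"

definition proper_colouring :: "'a set \<Rightarrow> 'a set set \<Rightarrow> ('a \<Rightarrow> nat) \<Rightarrow> nat \<Rightarrow> bool" where
  "proper_colouring V E c n \<longleftrightarrow> (\<forall>v\<in>V. c v < n) \<and>
     (\<forall>u\<in>V. \<forall>v\<in>V. {u, v} \<in> E \<longrightarrow> c u \<noteq> c v)"

definition chromatic_number :: "'a set \<Rightarrow> 'a set set \<Rightarrow> nat" where
  "chromatic_number V E = (LEAST n. \<exists>c. proper_colouring V E c n)"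

definition bipartite :: "'a set \<Rightarrow> 'a set set \<Rightarrow> bool" where
  "bipartite V E \<longleftrightarrow> (\<exists>c. proper_colouring V E c 2)"

definition encoding :: "'a set \<Rightarrow> 'a set set \<Rightarrow> nat \<Rightarrow> ('a \<Rightarrow> nat list) \<Rightarrow> bool" where
  "encoding V E l \<phi> \<longleftrightarrow> (\<forall>v\<in>V. length (\<phi> v) = l) \<and> inj_on \<phi> V \<and>
     (\<forall>u\<in>V. \<forall>v\<in>V. u \<noteq> v \<longrightarrow> ({u, v} \<in> E \<longleftrightarrow> (\<forall>i<l. \<phi> u ! i \<noteq> \<phi> v ! i)))"

definition well_begun_encoding :: "'a set \<Rightarrow> 'a set set \<Rightarrow> nat \<Rightarrow> ('a \<Rightarrow> nat list) \<Rightarrow> bool" where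
  "well_begun_encoding V E l \<phi> \<longleftrightarrow> encoding V E l \<phi> \<and> 0 < l \<and>
     (\<forall>v\<in>V. \<phi> v ! 0 < chromatic_number V E)"

end

theory Submission
  imports Defs
begin

definition swp :: "nat \<Rightarrow> nat \<Rightarrow> nat" where
  "swp a x = (if x = a then 0 else if x = 0 then a else x)"

lemma swp_same[simp]: "swp a a = 0" by (simp add: swp_def)
lemma swp_inj: "swp a x = swp a y \<longleftrightarrow> x = y" by (auto simp: swp_def)
lemma swp_bound: "a < n \<Longrightarrow> x < n \<Longrightarrow> swp a x < n" by (auto simp: swp_def)

definition bitv :: "nat \<Rightarrow> nat \<Rightarrow> nat" where "bitv i t = (i div 2^t) mod 2"

lemma bits_differ:
  "i < 2^m \<Longrightarrow> j < 2^m \<Longrightarrow> i \<noteq> j \<Longrightarrow> \<exists>t<m. bitv i t \<noteq> bitv j t"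
proof (induction m arbitrary: i j)
  case 0 then show ?case by simp
next
  case (Suc m)
  show ?case
  proof (cases "i mod 2 = j mod 2")
    case True
    then have "i div 2 \<noteq> j div 2" using Suc.prems(3)
      by (metis div_mult_mod_eq)
    moreover have "i div 2 < 2^m" "j div 2 < 2^m" using Suc.prems by auto
    ultimately obtain t where "t < m" "bitv (i div 2) t \<noteq> bitv (j div 2) t"
      using Suc.IH by blast
    then show ?thesis
      by (intro exI[of _ "Suc t"]) (auto simp: bitv_def div_mult2_eq)
  next
    case False
    then show ?thesis by (intro exI[of _ 0]) (auto simp: bitv_def)
  qed
qed

definition cf :: "(nat \<Rightarrow> 'a \<Rightarrow> nat list) \<Rightarrow> (nat \<Rightarrow> nat) \<Rightarrow> 'a \<Rightarrow> nat \<Rightarrow> nat \<Rightarrow> 'a \<Rightarrow> nat \<Rightarrow> nat" where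
  "cf \<phi>s ls g L i v t = (if t < L then (if t < ls i then swp (\<phi>s i g ! t) (\<phi>s i v ! t)
      else swp (\<phi>s i g ! 0) (\<phi>s i v ! 0))
    else if v = g then 0 else 1 + (swp (\<phi>s i g ! 0) (\<phi>s i v ! 0) + bitv i (t - L)) mod 2)"

lemma cf_g: "cf \<phi>s ls g L i g t = 0" by (simp add: cf_def)

lemma within:
  assumes enc: "encoding Vi Ei (ls i) (\<phi>s i)"
    and le: "ls i \<le> L" and pos: "0 < ls i"
    and c2: "\<forall>v\<in>Vi. swp (\<phi>s i g ! 0) (\<phi>s i v ! 0) < 2"
    and uv: "u \<in> Vi" "v \<in> Vi" "u \<noteq> v"
  shows "{u,v} \<in> Ei \<longleftrightarrow> (\<forall>t<L+m. cf \<phi>s ls g L i u t \<noteq> cf \<phi>s ls g L i v t)"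
proof
  assume e: "{u,v} \<in> Ei"
  then have d: "\<forall>t<ls i. \<phi>s i u ! t \<noteq> \<phi>s i v ! t" using enc uv unfolding encoding_def by blast
  have d0: "swp (\<phi>s i g ! 0) (\<phi>s i u ! 0) \<noteq> swp (\<phi>s i g ! 0) (\<phi>s i v ! 0)"
    using d pos swp_inj by blast
  have cu: "swp (\<phi>s i g ! 0) (\<phi>s i u ! 0) < 2" and cv: "swp (\<phi>s i g ! 0) (\<phi>s i v ! 0) < 2"
    using c2 uv by auto
  show "\<forall>t<L+m. cf \<phi>s ls g L i u t \<noteq> cf \<phi>s ls g L i v t"
  proof (intro allI impI)
    fix t assume "t < L+m"
    show "cf \<phi>s ls g L i u t \<noteq> cf \<phi>s ls g L i v t"
    proof (cases "t < L")
      case True then show ?thesis using d d0 swp_inj by (auto simp: cf_def)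
    next
      case False
      have "bitv i (t - L) < 2" by (simp add: bitv_def)
      moreover have "\<And>a b x::nat. a < 2 \<Longrightarrow> b < 2 \<Longrightarrow> a \<noteq> b \<Longrightarrow> x < 2 \<Longrightarrow> (a + x) mod 2 \<noteq> (b + x) mod 2"
        by presburger
      ultimately show ?thesis using False d0 cu cv uv(3) by (auto simp: cf_def)
    qed
  qed
next
  assume a: "\<forall>t<L+m. cf \<phi>s ls g L i u t \<noteq> cf \<phi>s ls g L i v t"
  have "\<forall>t<ls i. \<phi>s i u ! t \<noteq> \<phi>s i v ! t"
  proof (intro allI impI)
    fix t assume "t < ls i"
    then have "t < L+m" "t < L" using le by auto
    then show "\<phi>s i u ! t \<noteq> \<phi>s i v ! t" using a[rule_format, of t] \<open>t < ls i\<close> by (auto simp: cf_def)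
  qed
  then show "{u,v} \<in> Ei" using enc uv unfolding encoding_def by blast
qed

theorem lemma2:
  fixes k :: nat and V :: "nat \<Rightarrow> 'a set" and E :: "nat \<Rightarrow> 'a set set"
    and g :: 'a and ls :: "nat \<Rightarrow> nat" and \<phi>s :: "nat \<Rightarrow> 'a \<Rightarrow> nat list"
  assumes "k \<ge> 1"
    and "\<forall>i<k. simple_graph (V i) (E i) \<and> bipartite (V i) (E i)"
    and "\<forall>i<k. \<forall>j<k. i \<noteq> j \<longrightarrow> V i \<inter> V j = {g}"
    and "\<forall>i<k. well_begun_encoding (V i) (E i) (ls i) (\<phi>s i)"
  shows "\<exists>\<phi>. well_begun_encoding (\<Union>i<k. V i) (\<Union>i<k. E i)
            (Max (ls ` {..<k}) + nat \<lceil>log 2 (real k)\<rceil>) \<phi>"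
proof (cases "k = 1")
  case True
  have "{..<k} = {0}" using True by auto
  then show ?thesis using assms(4) True by (intro exI[of _ "\<phi>s 0"]) auto
next
  case False
  then have k2: "k \<ge> 2" using assms(1) by simp
  define L where "L = Max (ls ` {..<k})"
  define m where "m = nat \<lceil>log 2 (real k)\<rceil>"
  define c where "c i v = swp (\<phi>s i g ! 0) (\<phi>s i v ! 0)" for i v
  define U where "U = (\<Union>i<k. V i)"
  define F where "F = (\<Union>i<k. E i)"
  define \<phi> where "\<phi> v = map (cf \<phi>s ls g L (SOME i. i<k \<and> v \<in> V i) v) [0..<L+m]" for v
  have k2m: "k \<le> 2^m"
  proof -
    have "log 2 (real k) \<le> real m" unfolding m_def by linarith
    then have "2 powr log 2 (real k) \<le> 2 powr real m" by simp
    then have "real k \<le> 2 powr real m" using assms(1) by simp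
    then have "real k \<le> real (2^m)" by (simp add: powr_realpow)
    then show ?thesis by linarith
  qed
  have hasg: "g \<in> V i" if "i < k" for i
  proof -
    define j :: nat where "j = (if i = 0 then 1 else 0)"
    have "j < k" "j \<noteq> i" using k2 that unfolding j_def by auto
    then show ?thesis using assms(3) that by blast
  qed
  have lsL: "ls i \<le> L" if "i < k" for i
    unfolding L_def using that by (intro Max_ge) auto
  have enc: "encoding (V i) (E i) (ls i) (\<phi>s i)" and lpos: "0 < ls i"
    and wb0: "\<forall>v\<in>V i. \<phi>s i v ! 0 < chromatic_number (V i) (E i)" if "i<k" for i
    using assms(4) that unfolding well_begun_encoding_def by auto
  have chi2: "chromatic_number (V i) (E i) \<le> 2" if "i<k" for i
    using assms(2) that unfolding bipartite_def chromatic_number_def by (auto intro: Least_le)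
  have cchi: "c i v < chromatic_number (V i) (E i)" if "i<k" "v \<in> V i" for i v
    unfolding c_def using wb0 that hasg by (intro swp_bound) auto
  have c2: "c i v < 2" if "i<k" "v \<in> V i" for i v
    using cchi[OF that] chi2[OF that(1)] by linarith
  have phi_eq: "\<phi> v = map (cf \<phi>s ls g L i v) [0..<L+m]" if "i<k" "v \<in> V i" for i v
  proof -
    define j where "j = (SOME i. i<k \<and> v \<in> V i)"
    have j: "j < k" "v \<in> V j" unfolding j_def using someI[of "\<lambda>i. i<k \<and> v \<in> V i" i] that by auto
    show ?thesis
    proof (cases "j = i")
      case True then show ?thesis unfolding \<phi>_def j_def[symmetric] by simp
    next
      case False
      then have "v = g" using assms(3) j that by blast
      then show ?thesis unfolding \<phi>_def j_def[symmetric] by (simp add: cf_g)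
    qed
  qed
  have edge_mem: "u \<in> V l \<and> v \<in> V l \<and> u \<noteq> v" if lk: "l < k" and le: "{u,v} \<in> E l" for l u v
  proof -
    have "simple_graph (V l) (E l)" using assms(2) lk by blast
    then have "\<forall>e\<in>E l. \<exists>u v. e = {u, v} \<and> u \<noteq> v \<and> u \<in> V l \<and> v \<in> V l"
      unfolding simple_graph_def by blast
    then obtain a b where "{u,v} = {a,b}" "a \<noteq> b" "a \<in> V l" "b \<in> V l"
      using le by blast
    then show ?thesis by (auto simp: doubleton_eq_iff)
  qed
  have edge_within: "{u,v} \<in> F \<longleftrightarrow> {u,v} \<in> E i"
    if ik: "i<k" and ui: "u \<in> V i" and vi: "v \<in> V i" and uv: "u \<noteq> v" for i u v
  proof
    assume "{u,v} \<in> F"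
    then obtain l where l: "l < k" "{u,v} \<in> E l" unfolding F_def by auto
    then have ul: "u \<in> V l" and vl: "v \<in> V l" using edge_mem by auto
    have "l = i"
    proof (rule ccontr)
      assume "l \<noteq> i"
      then have "V i \<inter> V l = {g}" using assms(3) ik l(1) by blast
      then have "u \<in> {g}" "v \<in> {g}" using ul vl ui vi by (metis IntI)+
      then show False using uv by simp
    qed
    then show "{u,v} \<in> E i" using l by simp
  qed (use that in \<open>auto simp: F_def\<close>)
  have within_i: "{u,v} \<in> E i \<longleftrightarrow> (\<forall>t<L+m. cf \<phi>s ls g L i u t \<noteq> cf \<phi>s ls g L i v t)"
    if "i<k" "u \<in> V i" "v \<in> V i" "u \<noteq> v" for i u v
    using within[where \<phi>s=\<phi>s and ls=ls and i=i and L=L and g=g and m=m, OF enc[OF that(1)] lsL[OF that(1)] lpos[OF that(1)], of u v] c2 that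
    unfolding c_def by auto
  have cf0: "cf \<phi>s ls g L i v 0 = c i v" if "i<k" for i v
    using lpos[OF that] lsL[OF that] unfolding cf_def c_def by auto
  have cfL: "cf \<phi>s ls g L i v (L + t) = 1 + (c i v + bitv i t) mod 2" if "v \<noteq> g" for i v t
    using that unfolding cf_def c_def by auto
  have cross: "{u,v} \<notin> F \<and> (\<exists>t<L+m. cf \<phi>s ls g L i u t = cf \<phi>s ls g L j v t)
       \<and> (\<exists>t<L+m. cf \<phi>s ls g L i u t \<noteq> cf \<phi>s ls g L j v t)"
    if "i<k" "j<k" "i\<noteq>j" "u \<in> V i" "v \<in> V j" "u \<noteq> g" "v \<noteq> g" for i j u v
  proof (intro conjI)
    note th = that
    have nu: "u \<notin> V j" and nv: "v \<notin> V i" using assms(3) th by blast+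
    show "{u,v} \<notin> F"
    proof
      assume "{u,v} \<in> F"
      then obtain l where l: "l < k" "{u,v} \<in> E l" unfolding F_def by auto
      then have "u \<in> V l" "v \<in> V l" using edge_mem by auto
      then show False using nu nv assms(3) th l by blast
    qed
    obtain t where t: "t < m" "bitv i t \<noteq> bitv j t"
      using bits_differ[of i m j] th k2m by auto
    have bi: "bitv i t < 2" "bitv j t < 2" by (auto simp: bitv_def)
    have cu: "c i u < 2" and cv: "c j v < 2" using c2 th by auto
    have Lpos: "0 < L + m" using lsL[OF th(1)] lpos[OF th(1)] by simp
    show "\<exists>t<L+m. cf \<phi>s ls g L i u t = cf \<phi>s ls g L j v t"
    proof (cases "c i u = c j v")
      case True then show ?thesis using cf0 th Lpos by (intro exI[of _ 0]) auto
    next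
      case False
      have "(c i u + bitv i t) mod 2 = (c j v + bitv j t) mod 2" using False t bi cu cv by presburger
      then show ?thesis using cfL th t by (intro exI[of _ "L+t"]) auto
    qed
    show "\<exists>t<L+m. cf \<phi>s ls g L i u t \<noteq> cf \<phi>s ls g L j v t"
    proof (cases "c i u = c j v")
      case False then show ?thesis using cf0 th Lpos by (intro exI[of _ 0]) auto
    next
      case True
      have "(c i u + bitv i t) mod 2 \<noteq> (c j v + bitv j t) mod 2" using True t bi cu cv by presburger
      then show ?thesis using cfL th t by (intro exI[of _ "L+t"]) auto
    qed
  qed
  have nth_phi: "\<phi> v ! t = cf \<phi>s ls g L i v t" if "i<k" "v \<in> V i" "t < L+m" for i v t
    using phi_eq[OF that(1,2)] that(3) by simp
  have adj: "{u,v} \<in> F \<longleftrightarrow> (\<forall>t<L+m. \<phi> u ! t \<noteq> \<phi> v ! t)"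
    and neq: "\<phi> u \<noteq> \<phi> v"
    if "u \<in> U" "v \<in> U" "u \<noteq> v" for u v
  proof -
    note th = that
    obtain i j where ij: "i<k" "j<k" "u \<in> V i" "v \<in> V j" using th unfolding U_def by auto
    have "({u,v} \<in> F \<longleftrightarrow> (\<forall>t<L+m. \<phi> u ! t \<noteq> \<phi> v ! t)) \<and> \<phi> u \<noteq> \<phi> v"
    proof (cases "\<exists>l<k. u \<in> V l \<and> v \<in> V l")
      case True
      then obtain l where l: "l<k" "u \<in> V l" "v \<in> V l" by blast
      have A: "{u,v} \<in> F \<longleftrightarrow> (\<forall>t<L+m. \<phi> u ! t \<noteq> \<phi> v ! t)"
        using edge_within[OF l th(3)] within_i[OF l th(3)] nth_phi l by auto
      have "\<phi> u \<noteq> \<phi> v"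
      proof
        assume eq: "\<phi> u = \<phi> v"
        have "\<phi>s l u = \<phi>s l v"
        proof (rule nth_equalityI)
          show "length (\<phi>s l u) = length (\<phi>s l v)" using enc[OF l(1)] l unfolding encoding_def by auto
          fix t assume "t < length (\<phi>s l u)"
          then have tl: "t < ls l" using enc[OF l(1)] l unfolding encoding_def by auto
          then have "t < L + m" using lsL[OF l(1)] by simp
          then have "cf \<phi>s ls g L l u t = cf \<phi>s ls g L l v t" using eq nth_phi l by metis
          then show "\<phi>s l u ! t = \<phi>s l v ! t" using tl lsL[OF l(1)]
            by (auto simp: cf_def swp_inj)
        qed
        then show False using enc[OF l(1)] l th(3) unfolding encoding_def inj_on_def by blast
      qed
      then show ?thesis using A by blast
    next
      case False
      then have "i \<noteq> j" "u \<noteq> g" "v \<noteq> g" using ij hasg by blast+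
      from cross[OF ij(1,2) this(1) ij(3,4) this(2,3)] obtain t1 t2 where
        nF: "{u,v} \<notin> F" and t1: "t1 < L+m" "cf \<phi>s ls g L i u t1 = cf \<phi>s ls g L j v t1"
        and t2: "t2 < L+m" "cf \<phi>s ls g L i u t2 \<noteq> cf \<phi>s ls g L j v t2" by blast
      have e1: "\<phi> u ! t1 = \<phi> v ! t1" using nth_phi[OF ij(1,3) t1(1)] nth_phi[OF ij(2,4) t1(1)] t1(2) by simp
      have e2: "\<phi> u ! t2 \<noteq> \<phi> v ! t2" using nth_phi[OF ij(1,3) t2(1)] nth_phi[OF ij(2,4) t2(1)] t2(2) by simp
      show ?thesis using nF e1 e2 t1(1) by auto
    qed
    then show "{u,v} \<in> F \<longleftrightarrow> (\<forall>t<L+m. \<phi> u ! t \<noteq> \<phi> v ! t)" "\<phi> u \<noteq> \<phi> v" by auto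
  qed
  have Lpos: "0 < L + m" using lsL[of 0] lpos[of 0] assms(1) by simp
  have phi0: "\<phi> v ! 0 = c i v" if "i<k" "v \<in> V i" for i v
    using nth_phi[OF that Lpos] cf0[OF that(1)] by simp
  have proper: "proper_colouring U F (\<lambda>v. \<phi> v ! 0) 2"
    unfolding proper_colouring_def
  proof (intro conjI ballI impI)
    fix v assume "v \<in> U"
    then obtain i where "i<k" "v \<in> V i" unfolding U_def by auto
    then show "\<phi> v ! 0 < 2" using phi0 c2 by auto
  next
    fix u v assume uv: "u \<in> U" "v \<in> U" "{u,v} \<in> F"
    then obtain l where l: "l < k" "{u,v} \<in> E l" unfolding F_def by auto
    then have "u \<noteq> v" using edge_mem by auto
    then show "\<phi> u ! 0 \<noteq> \<phi> v ! 0" using adj[OF uv(1,2)] uv(3) Lpos by auto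
  qed
  define \<chi> where "\<chi> = chromatic_number U F"
  obtain c' where c': "proper_colouring U F c' \<chi>"
    unfolding \<chi>_def chromatic_number_def using LeastI_ex[of "\<lambda>n. \<exists>c. proper_colouring U F c n"] proper
    by blast
  have chi_le: "chromatic_number (V i) (E i) \<le> \<chi>" if "i<k" for i
  proof -
    have "proper_colouring (V i) (E i) c' \<chi>"
      using c' that unfolding proper_colouring_def U_def F_def by blast
    then show ?thesis unfolding chromatic_number_def by (auto intro: Least_le)
  qed
  have "well_begun_encoding U F (L + m) \<phi>"
    unfolding well_begun_encoding_def encoding_def
  proof (intro conjI Lpos)
    show "\<forall>v\<in>U. length (\<phi> v) = L + m" by (simp add: \<phi>_def)
  next
    show "inj_on \<phi> U" using neq unfolding inj_on_def by blast
  next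
    show "\<forall>u\<in>U. \<forall>v\<in>U. u \<noteq> v \<longrightarrow> ({u, v} \<in> F) = (\<forall>i<L + m. \<phi> u ! i \<noteq> \<phi> v ! i)"
      using adj by blast
  next
    show "\<forall>v\<in>U. \<phi> v ! 0 < chromatic_number U F"
    proof
      fix v assume "v \<in> U"
      then obtain i where i: "i<k" "v \<in> V i" unfolding U_def by auto
      show "\<phi> v ! 0 < chromatic_number U F"
        using phi0[OF i] cchi[OF i] chi_le[OF i(1)] unfolding \<chi>_def by linarith
    qed
  qed
  then show ?thesis unfolding U_def F_def L_def m_def by blast
qed

end
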